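(* Let $w, w'$ be words over $\Omega$ of lengths $k > k'$. Then $h_w(n) - q^{k-k'} h_{w'}(n-k+k') \le 0$ for all integers $n \le k+1$.
   Context: Let $\Omega$ be a finite alphabet with $q\ge2$ letters; a word of length $k$ is written $w = w_k\dots w_1$. For any integer $n$, $h_w(n)$ is the number of strings of length $n$ over $\Omega$ whose last $k$ characters form $w$ and which contain $w$ as a block of $k$ consecutive characters nowhere else; in particular $h_w(n) = 0$ for all $n < k$ (including negative $n$) and $h_w(k)=1$. *)

theory Defs
  imports Main
begin

text \<open>Strings and words are lists read left to right; the last character of a
  string is its last list element. The word w = w_k ... w_1 is the list [w_k, ..., w_1].\<close>

definition occurs_at :: "'a list \<Rightarrow> 'a list \<Rightarrow> nat \<Rightarrow> bool" where
  "occurs_at w s i \<longleftrightarrow> i + length w \<le> length s \<and> take (length w) (drop i s) = w"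

definition h :: "'a set \<Rightarrow> 'a list \<Rightarrow> int \<Rightarrow> nat" where
  "h \<Omega> w n = (if n < 0 then 0 else
     card {s. set s \<subseteq> \<Omega> \<and> length s = nat n \<and> length w \<le> length s
              \<and> drop (length s - length w) s = w
              \<and> (\<forall>i. occurs_at w s i \<longrightarrow> i = length s - length w)})"

end

theory Submission
  imports Defs
begin

lemma h_small: "n < int (length w) \<Longrightarrow> h \<Omega> w n = 0"
proof -
  assume a: "n < int (length w)"
  show ?thesis
  proof (cases "n < 0")
    case True thus ?thesis unfolding h_def by simp
  next
    case False
  have "{s. set s \<subseteq> \<Omega> \<and> length s = nat n \<and> length w \<le> length s
              \<and> drop (length s - length w) s = w
              \<and> (\<forall>i. occurs_at w s i \<longrightarrow> i = length s - length w)} = {}"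
    using a False by auto
  thus ?thesis unfolding h_def by (simp del: Collect_empty_eq)
qed
qed

lemma h_eq1:
  assumes "set w \<subseteq> \<Omega>"
  shows "h \<Omega> w (int (length w)) = 1"
proof -
  have "{s. set s \<subseteq> \<Omega> \<and> length s = nat (int (length w)) \<and> length w \<le> length s
              \<and> drop (length s - length w) s = w
              \<and> (\<forall>i. occurs_at w s i \<longrightarrow> i = length s - length w)} = {w}"
    using assms by (auto simp: occurs_at_def)
  thus ?thesis unfolding h_def by simp
qed

lemma h_le:
  assumes "finite \<Omega>"
  shows "h \<Omega> w (int (length w) + 1) \<le> card \<Omega>"
proof -
  let ?S = "{s. set s \<subseteq> \<Omega> \<and> length s = nat (int (length w) + 1) \<and> length w \<le> length s
              \<and> drop (length s - length w) s = w
              \<and> (\<forall>i. occurs_at w s i \<longrightarrow> i = length s - length w)}"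
  have "?S \<subseteq> (\<lambda>c. c # w) ` \<Omega>"
  proof
    fix s assume s: "s \<in> ?S"
    then obtain c t where st: "s = c # t" by (cases s) auto
    have "nat (int (length w) + 1) - length w = 1" by simp
    with s st show "s \<in> (\<lambda>c. c # w) ` \<Omega>" by auto
  qed
  hence "card ?S \<le> card ((\<lambda>c. c # w) ` \<Omega>)" using assms by (intro card_mono) auto
  also have "\<dots> \<le> card \<Omega>" by (rule card_image_le[OF assms])
  finally show ?thesis unfolding h_def by simp
qed

lemma h_ge:
  assumes "finite \<Omega>" "set w \<subseteq> \<Omega>" "w \<noteq> []"
  shows "card \<Omega> - 1 \<le> h \<Omega> w (int (length w) + 1)"
proof -
  let ?S = "{s. set s \<subseteq> \<Omega> \<and> length s = nat (int (length w) + 1) \<and> length w \<le> length s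
              \<and> drop (length s - length w) s = w
              \<and> (\<forall>i. occurs_at w s i \<longrightarrow> i = length s - length w)}"
  have sub: "?S \<subseteq> (\<lambda>c. c # w) ` \<Omega>"
  proof
    fix s assume s: "s \<in> ?S"
    then obtain c t where st: "s = c # t" by (cases s) auto
    have "nat (int (length w) + 1) - length w = 1" by simp
    with s st show "s \<in> (\<lambda>c. c # w) ` \<Omega>" by auto
  qed
  have fin: "finite ?S" using finite_subset[OF sub] assms(1) by auto
  have sup: "(\<lambda>c. c # w) ` (\<Omega> - {hd w}) \<subseteq> ?S"
  proof
    fix s assume "s \<in> (\<lambda>c. c # w) ` (\<Omega> - {hd w})"
    then obtain c where c: "c \<in> \<Omega>" "c \<noteq> hd w" "s = c # w" by auto
    have occ: "i = 1" if "occurs_at w s i" for i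
    proof -
      from that c have le: "i \<le> 1" by (auto simp: occurs_at_def)
      have "i \<noteq> 0"
      proof
        assume "i = 0"
        with that c have "take (length w) (c # w) = w" by (simp add: occurs_at_def)
        hence "hd (take (length w) (c # w)) = hd w" by simp
        moreover have "hd (take (length w) (c # w)) = c" using assms(3)
          by (cases w) auto
        ultimately show False using c by simp
      qed
      with le show ?thesis by simp
    qed
    show "s \<in> ?S" using c assms occ by auto
  qed
  have "card \<Omega> - 1 \<le> card (\<Omega> - {hd w})"
    by (simp add: card_Diff_singleton_if)
  also have "\<dots> = card ((\<lambda>c. c # w) ` (\<Omega> - {hd w}))"
    by (rule card_image[symmetric]) (auto simp: inj_on_def)
  also have "\<dots> \<le> card ?S" by (rule card_mono[OF fin sup])
  finally show ?thesis unfolding h_def by simp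
qed

theorem lemma5p1:
  fixes \<Omega> :: "'a set" and w w' :: "'a list" and n :: int
  assumes "finite \<Omega>" and "card \<Omega> \<ge> 2"
    and "set w \<subseteq> \<Omega>" and "set w' \<subseteq> \<Omega>"
    and "length w' \<ge> 1" and "length w > length w'"
    and "n \<le> int (length w) + 1"
  shows "int (h \<Omega> w n) - int (card \<Omega>) ^ (length w - length w')
           * int (h \<Omega> w' (n - int (length w) + int (length w'))) \<le> 0"
proof -
  define q where "q = int (card \<Omega>)"
  define d where "d = length w - length w'"
  have q2: "q \<ge> 2" using assms(2) q_def by simp
  have d1: "d \<ge> 1" using assms(6) d_def by simp
  have qd: "q ^ d \<ge> q"
  proof -
    have "q ^ 1 \<le> q ^ d" by (rule power_increasing[OF d1]) (use q2 in simp)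
    thus ?thesis by simp
  qed
  have "n < int (length w) \<or> n = int (length w) \<or> n = int (length w) + 1"
    using assms(7) by linarith
  moreover
  { assume "n < int (length w)"
    hence ?thesis using h_small[of n w \<Omega>] by simp }
  moreover
  { assume n: "n = int (length w)"
    hence "n - int (length w) + int (length w') = int (length w')" by simp
    hence ?thesis using n h_eq1[OF assms(3)] h_eq1[OF assms(4)] qd q2
      unfolding q_def d_def by simp }
  moreover
  { assume n: "n = int (length w) + 1"
    hence e: "n - int (length w) + int (length w') = int (length w') + 1" by simp
    have a: "int (h \<Omega> w n) \<le> q" using h_le[OF assms(1), of w] n q_def by simp
    have w'ne: "w' \<noteq> []" using assms(5) by auto
    have b: "q - 1 \<le> int (h \<Omega> w' (int (length w') + 1))"
      using h_ge[OF assms(1) assms(4) w'ne] q_def assms(2) by linarith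
    have "q \<le> q * (q - 1)" using q2 by (simp add: algebra_simps)
    also have "\<dots> \<le> q ^ d * (q - 1)" by (rule mult_right_mono[OF qd]) (use q2 in simp)
    also have "\<dots> \<le> q ^ d * int (h \<Omega> w' (int (length w') + 1))"
      by (rule mult_left_mono[OF b]) (use q2 in simp)
    finally have "int (h \<Omega> w n) \<le> q ^ d * int (h \<Omega> w' (n - int (length w) + int (length w')))"
      using a e by (simp add: add.commute)
    hence ?thesis unfolding q_def d_def by simp }
  ultimately show ?thesis by blast
qed

end
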